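(* Fix a real number $\tau\neq 0$ and consider the following linear operators on smooth functions $\Phi(x,t)$: $$H=\partial_t,\quad P=\partial_x,\quad K=-x\,\frac{e^{\tau\partial_t}-1}{\tau}-t\,e^{-\tau\partial_t}\partial_x,\quad D=-x\partial_x-t\,\frac{1-e^{-\tau\partial_t}}{\tau},$$ $$C_1=(x^2+t^2e^{-\tau\partial_t})\frac{e^{\tau\partial_t}-1}{\tau}+2xt\partial_x+\tau x\partial_x+\tau x^2\partial_x^2,$$ $$C_2=-(x^2+t^2e^{-2\tau\partial_t})\partial_x-2xt\,\frac{1-e^{-\tau\partial_t}}{\tau}+\tau t\,e^{-2\tau\partial_t}\partial_x,$$ where $e^{a\tau\partial_t}$ denotes the shift operator $\Phi(x,t)\mapsto\Phi(x,t+a\tau)$ and, in expressions involving $e^{\pm\tau H}$, $e^{\pm\tau H}$ is interpreted as $e^{\pm\tau\partial_t}$. Then these operators satisfy the commutation relations $[K,H]=e^{-\tau H}P$, $[K,P]=(e^{\tau H}-1)/\tau$, $[H,P]=0$, $[D,H]=(1-e^{-\tau H})/\tau$, $[D,C_1]=-C_1+\tau D^2$, $[H,C_1]=-2D$, $[D,P]=P$, $[D,C_2]=-C_2$, $[P,C_2]=2D$, $[K,C_1]=C_2$, $[K,C_2]=C_1-\tau D^2$, $[C_1,C_2]=-\tau(DC_2+C_2D)$, $[H,C_2]=e^{-\tau H}K+Ke^{-\tau H}$, $[P,C_1]=-2K-\tau(DP+PD)$, $[K,D]=0$, i.e. they give a representation of the algebra $U_\tau(so(2,2))$. As $\tau\to0$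 they reduce to the vector fields $H=\partial_t$, $P=\partial_x$, $K=-t\partial_x-x\partial_t$, $D=-x\partial_x-t\partial_t$, $C_1=(x^2+t^2)\partial_t+2xt\partial_x$, $C_2=-(x^2+t^2)\partial_x-2xt\partial_t$.
   Context: Here $(e^{\tau\partial_t}-1)/\tau$ and $(1-e^{-\tau\partial_t})/\tau$ are the forward and backward difference operators in $t$ with step $\tau$; all products are compositions of operators, with multiplication operators by $x$, $t$ understood. *)

theory Defs
  imports "HOL-Analysis.Analysis"
begin

type_synonym fn2 = "real \<Rightarrow> real \<Rightarrow> real"
type_synonym op2 = "fn2 \<Rightarrow> fn2"

definition oadd :: "op2 \<Rightarrow> op2 \<Rightarrow> op2" where
  "oadd A B = (\<lambda>f x t. A f x t + B f x t)"
definition osub :: "op2 \<Rightarrow> op2 \<Rightarrow> op2" where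
  "osub A B = (\<lambda>f x t. A f x t - B f x t)"
definition oscale :: "real \<Rightarrow> op2 \<Rightarrow> op2" where
  "oscale c A = (\<lambda>f x t. c * A f x t)"
definition ozero :: op2 where
  "ozero = (\<lambda>f x t. 0)"
definition comm :: "op2 \<Rightarrow> op2 \<Rightarrow> op2" where
  "comm A B = osub (A \<circ> B) (B \<circ> A)"

definition pdx :: op2 where
  "pdx f = (\<lambda>x t. deriv (\<lambda>y. f y t) x)"
definition pdt :: op2 where
  "pdt f = (\<lambda>x t. deriv (\<lambda>s. f x s) t)"
definition mulx :: op2 where
  "mulx f = (\<lambda>x t. x * f x t)"
definition mult :: op2 where
  "mult f = (\<lambda>x t. t * f x t)"
text \<open>shift a: Phi(x,t) maps to Phi(x,t+a); so e^(c tau d_t) = shift (c*tau).\<close>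
definition shift :: "real \<Rightarrow> op2" where
  "shift a f = (\<lambda>x t. f x (t + a))"

definition fwd :: "real \<Rightarrow> op2" where
  "fwd \<tau> = oscale (1 / \<tau>) (osub (shift \<tau>) id)"
definition bwd :: "real \<Rightarrow> op2" where
  "bwd \<tau> = oscale (1 / \<tau>) (osub id (shift (- \<tau>)))"

text \<open>Smoothness: every iterated partial derivative is (jointly, Frechet) differentiable
  everywhere on R^2, i.e. Phi is C-infinity.\<close>
fun iter_pd :: "bool list \<Rightarrow> op2" where
  "iter_pd [] f = f"
| "iter_pd (b # bs) f = (if b then pdx else pdt) (iter_pd bs f)"

definition smooth2 :: "fn2 \<Rightarrow> bool" where
  "smooth2 f \<longleftrightarrow> (\<forall>bs x t. (\<lambda>(y, s). iter_pd bs f y s) differentiable (at (x, t)))"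

definition opH :: op2 where "opH = pdt"
definition opP :: op2 where "opP = pdx"
definition opK :: "real \<Rightarrow> op2" where
  "opK \<tau> = osub (oscale (-1) (mulx \<circ> fwd \<tau>)) (mult \<circ> shift (- \<tau>) \<circ> pdx)"
definition opD :: "real \<Rightarrow> op2" where
  "opD \<tau> = osub (oscale (-1) (mulx \<circ> pdx)) (mult \<circ> bwd \<tau>)"
definition opC1 :: "real \<Rightarrow> op2" where
  "opC1 \<tau> = oadd (oadd (oadd
      (oadd (mulx \<circ> mulx) (mult \<circ> mult \<circ> shift (- \<tau>)) \<circ> fwd \<tau>)
      (oscale 2 (mulx \<circ> mult \<circ> pdx)))
      (oscale \<tau> (mulx \<circ> pdx)))
      (oscale \<tau> (mulx \<circ> mulx \<circ> pdx \<circ> pdx))"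
definition opC2 :: "real \<Rightarrow> op2" where
  "opC2 \<tau> = oadd (osub
      (oscale (-1) (oadd (mulx \<circ> mulx) (mult \<circ> mult \<circ> shift (- 2 * \<tau>)) \<circ> pdx))
      (oscale 2 (mulx \<circ> mult \<circ> bwd \<tau>)))
      (oscale \<tau> (mult \<circ> shift (- 2 * \<tau>) \<circ> pdx))"

definition opK0 :: op2 where "opK0 = osub (oscale (-1) (mult \<circ> pdx)) (mulx \<circ> pdt)"
definition opD0 :: op2 where "opD0 = osub (oscale (-1) (mulx \<circ> pdx)) (mult \<circ> pdt)"
definition opC10 :: op2 where
  "opC10 = oadd (oadd (mulx \<circ> mulx) (mult \<circ> mult) \<circ> pdt) (oscale 2 (mulx \<circ> mult \<circ> pdx))"
definition opC20 :: op2 where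
  "opC20 = osub (oscale (-1) (oadd (mulx \<circ> mulx) (mult \<circ> mult) \<circ> pdx)) (oscale 2 (mulx \<circ> mult \<circ> pdt))"

end

theory Submission
  imports Defs
begin


definition fadd :: "fn2 \<Rightarrow> fn2 \<Rightarrow> fn2" where "fadd f g = (\<lambda>x t. f x t + g x t)"
definition fsub :: "fn2 \<Rightarrow> fn2 \<Rightarrow> fn2" where "fsub f g = (\<lambda>x t. f x t - g x t)"
definition fscale :: "real \<Rightarrow> fn2 \<Rightarrow> fn2" where "fscale c f = (\<lambda>x t. c * f x t)"

definition D1 :: "fn2 \<Rightarrow> bool" where
  "D1 h \<longleftrightarrow> (\<forall>x t. (\<lambda>(y, s). h y s) differentiable (at (x, t)))"

lemma D1_px: assumes "D1 h" shows "((\<lambda>y. h y t) has_real_derivative pdx h x t) (at x)"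
proof -
  have "(\<lambda>y. (\<lambda>(y, s). h y s) ((\<lambda>y. (y, t)) y)) differentiable at x"
    by (rule differentiable_compose[where f="\<lambda>(y, s). h y s"]) (use assms in \<open>auto simp: D1_def\<close>)
  then have "(\<lambda>y. h y t) differentiable at x" by simp
  then show ?thesis unfolding pdx_def by (simp add: DERIV_deriv_iff_real_differentiable)
qed

lemma D1_pt: assumes "D1 h" shows "((\<lambda>s. h x s) has_real_derivative pdt h x t) (at t)"
proof -
  have "(\<lambda>s. (\<lambda>(y, s). h y s) ((\<lambda>s. (x, s)) s)) differentiable at t"
    by (rule differentiable_compose[where f="\<lambda>(y, s). h y s"]) (use assms in \<open>auto simp: D1_def\<close>)
  then have "(\<lambda>s. h x s) differentiable at t" by simp
  then show ?thesis unfolding pdt_def by (simp add: DERIV_deriv_iff_real_differentiable)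
qed

lemma D1_cont: assumes "D1 h" shows "isCont (\<lambda>p. h (fst p) (snd p)) p"
proof -
  obtain x t where p: "p = (x, t)" by fastforce
  have "(\<lambda>(y, s). h y s) differentiable (at (x, t))" using assms by (auto simp: D1_def)
  then have "isCont (\<lambda>(y, s). h y s) (x, t)" by (rule differentiable_imp_continuous_within)
  then show ?thesis by (simp add: p case_prod_beta')
qed

lemma D1_add: "D1 f \<Longrightarrow> D1 g \<Longrightarrow> D1 (fadd f g)"
proof -
  assume a: "D1 f" "D1 g"
  show ?thesis unfolding D1_def fadd_def
  proof (intro allI)
    fix x t
    have "(\<lambda>p. (\<lambda>(y, s). f y s) p + (\<lambda>(y, s). g y s) p) differentiable (at (x, t))"
      using a by (intro differentiable_add) (auto simp: D1_def)
    then show "(\<lambda>(y, s). f y s + g y s) differentiable (at (x, t))" by (simp add: case_prod_beta')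
  qed
qed

lemma D1_scale: "D1 f \<Longrightarrow> D1 (fscale c f)"
proof -
  assume a: "D1 f"
  show ?thesis unfolding D1_def fscale_def
  proof (intro allI)
    fix x t
    have "(\<lambda>p. c * (\<lambda>(y, s). f y s) p) differentiable (at (x, t))"
      using a by (intro differentiable_mult differentiable_const) (auto simp: D1_def)
    then show "(\<lambda>(y, s). c * f y s) differentiable (at (x, t))" by (simp add: case_prod_beta')
  qed
qed

lemma D1_mulx: "D1 f \<Longrightarrow> D1 (mulx f)"
proof -
  assume a: "D1 f"
  show ?thesis unfolding D1_def mulx_def
  proof (intro allI)
    fix x t
    have "(\<lambda>p. fst p * (\<lambda>(y, s). f y s) p) differentiable (at (x, t))"
      using a by (intro differentiable_mult differentiableI[OF has_derivative_fst[OF has_derivative_ident]]) (auto simp: D1_def)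
    then show "(\<lambda>(y, s). y * f y s) differentiable (at (x, t))" by (simp add: case_prod_beta')
  qed
qed

lemma D1_mult: "D1 f \<Longrightarrow> D1 (mult f)"
proof -
  assume a: "D1 f"
  show ?thesis unfolding D1_def mult_def
  proof (intro allI)
    fix x t
    have "(\<lambda>p. snd p * (\<lambda>(y, s). f y s) p) differentiable (at (x, t))"
      using a by (intro differentiable_mult differentiableI[OF has_derivative_snd[OF has_derivative_ident]]) (auto simp: D1_def)
    then show "(\<lambda>(y, s). s * f y s) differentiable (at (x, t))" by (simp add: case_prod_beta')
  qed
qed

lemma D1_shift: "D1 f \<Longrightarrow> D1 (shift a f)"
proof -
  assume a: "D1 f"
  show ?thesis unfolding D1_def shift_def
  proof (intro allI)
    fix x t
    have d: "(\<lambda>p::real\<times>real. p + (0, a)) differentiable (at (x, t))"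
      by (intro differentiable_add differentiable_ident differentiable_const)
    have e: "(\<lambda>(y, s). f y s) differentiable (at ((x, t) + (0, a)))"
      using a by (simp add: D1_def)
    have "(\<lambda>p. (\<lambda>(y, s). f y s) (p + (0, a))) differentiable (at (x, t))"
      by (rule differentiable_compose[OF e d])
    then show "(\<lambda>(y, s). f y (s + a)) differentiable (at (x, t))" by (simp add: case_prod_beta')
  qed
qed



lemma pdx_eqI: "(\<And>x t. ((\<lambda>y. h y t) has_real_derivative H x t) (at x)) \<Longrightarrow> pdx h = H"
  unfolding pdx_def by (intro ext DERIV_imp_deriv) 

lemma pdt_eqI: "(\<And>x t. ((\<lambda>s. h x s) has_real_derivative H x t) (at t)) \<Longrightarrow> pdt h = H"
  unfolding pdt_def by (intro ext DERIV_imp_deriv) 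

lemma pdx_shift: "pdx (shift a f) = shift a (pdx f)"
  by (simp add: pdx_def shift_def)

lemma deriv_shift_eq: "deriv (\<lambda>s. g (s + a)) t = deriv g (t + a)"
  unfolding deriv_def by (simp add: DERIV_shift)

lemma pdt_shift: "pdt (shift a f) = shift a (pdt f)"
  by (simp add: pdt_def shift_def deriv_shift_eq)

definition closedS :: "fn2 set \<Rightarrow> bool" where
  "closedS S \<longleftrightarrow> (\<forall>g\<in>S. D1 g \<and> pdx g \<in> S \<and> pdt g \<in> S) \<and> (\<forall>g\<in>S. \<forall>h\<in>S. fadd g h \<in> S)
     \<and> (\<forall>c. \<forall>g\<in>S. fscale c g \<in> S)"

definition G :: "fn2 \<Rightarrow> bool" where
  "G f \<longleftrightarrow> (\<exists>S. f \<in> S \<and> closedS S)"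

lemma G_D1: "G f \<Longrightarrow> D1 f"
  by (auto simp: G_def closedS_def)

lemma G_pdx: "G f \<Longrightarrow> G (pdx f)"
  unfolding G_def closedS_def by blast

lemma G_pdt: "G f \<Longrightarrow> G (pdt f)"
  unfolding G_def closedS_def by blast

lemma G_fscale: "G f \<Longrightarrow> G (fscale c f)"
  unfolding G_def closedS_def by blast

lemma pdx_fadd_D: "D1 f \<Longrightarrow> D1 g \<Longrightarrow> pdx (fadd f g) = fadd (pdx f) (pdx g)"
  by (rule pdx_eqI) (auto simp: fadd_def intro!: derivative_eq_intros D1_px)

lemma pdt_fadd_D: "D1 f \<Longrightarrow> D1 g \<Longrightarrow> pdt (fadd f g) = fadd (pdt f) (pdt g)"
  by (rule pdt_eqI) (auto simp: fadd_def intro!: derivative_eq_intros D1_pt)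

lemma pdx_fscale_D: "D1 f \<Longrightarrow> pdx (fscale c f) = fscale c (pdx f)"
  by (rule pdx_eqI) (auto simp: fscale_def intro!: derivative_eq_intros D1_px)

lemma pdt_fscale_D: "D1 f \<Longrightarrow> pdt (fscale c f) = fscale c (pdt f)"
  by (rule pdt_eqI) (auto simp: fscale_def intro!: derivative_eq_intros D1_pt)

lemma pdx_mulx_D: "D1 f \<Longrightarrow> pdx (mulx f) = fadd f (mulx (pdx f))"
  by (rule pdx_eqI) (auto simp: fadd_def mulx_def intro!: derivative_eq_intros D1_px)

lemma pdt_mulx_D: "D1 f \<Longrightarrow> pdt (mulx f) = mulx (pdt f)"
  by (rule pdt_eqI) (auto simp: mulx_def intro!: derivative_eq_intros D1_pt)

lemma pdx_mult_D: "D1 f \<Longrightarrow> pdx (mult f) = mult (pdx f)"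
  by (rule pdx_eqI) (auto simp: mult_def intro!: derivative_eq_intros D1_px)

lemma pdt_mult_D: "D1 f \<Longrightarrow> pdt (mult f) = fadd f (mult (pdt f))"
  by (rule pdt_eqI) (auto simp: fadd_def mult_def intro!: derivative_eq_intros D1_pt)

lemma G_fadd: assumes "G f" "G g" shows "G (fadd f g)"
proof -
  obtain S1 where S1: "f \<in> S1" "closedS S1" using assms(1) by (auto simp: G_def)
  obtain S2 where S2: "g \<in> S2" "closedS S2" using assms(2) by (auto simp: G_def)
  define S where "S = {fadd a b | a b. a \<in> S1 \<and> b \<in> S2}"
  have "fadd f g \<in> S" using S1 S2 by (auto simp: S_def)
  moreover have "closedS S"
    unfolding closedS_def
  proof (intro conjI ballI allI)
    fix h assume "h \<in> S"
    then obtain a b where h: "h = fadd a b" "a \<in> S1" "b \<in> S2" by (auto simp: S_def)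
    have D: "D1 a" "D1 b" using h S1 S2 by (auto simp: closedS_def)
    show "D1 h" using D h by (simp add: D1_add)
    show "pdx h \<in> S" using h D S1 S2 unfolding S_def closedS_def by (auto simp: pdx_fadd_D)
    show "pdt h \<in> S" using h D S1 S2 unfolding S_def closedS_def by (auto simp: pdt_fadd_D)
  next
    fix h h' assume "h \<in> S" "h' \<in> S"
    then obtain a b a' b' where h: "h = fadd a b" "a \<in> S1" "b \<in> S2" "h' = fadd a' b'" "a' \<in> S1" "b' \<in> S2"
      by (auto simp: S_def)
    have "fadd h h' = fadd (fadd a a') (fadd b b')" by (simp add: h fadd_def algebra_simps)
    then show "fadd h h' \<in> S" using h S1 S2 unfolding S_def closedS_def by blast
  next
    fix c h assume "h \<in> S"
    then obtain a b where h: "h = fadd a b" "a \<in> S1" "b \<in> S2" by (auto simp: S_def)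
    have "fscale c h = fadd (fscale c a) (fscale c b)" by (simp add: h fadd_def fscale_def algebra_simps)
    then show "fscale c h \<in> S" using h S1 S2 unfolding S_def closedS_def by blast
  qed
  ultimately show ?thesis by (auto simp: G_def)
qed

lemma G_mulx: assumes "G f" shows "G (mulx f)"
proof -
  obtain S1 where S1: "f \<in> S1" "closedS S1" using assms(1) by (auto simp: G_def)
  define S where "S = {fadd (mulx a) b | a b. a \<in> S1 \<and> b \<in> S1}"
  have "mulx f = fadd (mulx f) (fscale 0 f)" by (simp add: fadd_def fscale_def)
  then have "mulx f \<in> S" using S1 unfolding S_def closedS_def by blast
  moreover have "closedS S"
    unfolding closedS_def
  proof (intro conjI ballI allI)
    fix h assume "h \<in> S"
    then obtain a b where h: "h = fadd (mulx a) b" "a \<in> S1" "b \<in> S1" by (auto simp: S_def)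
    have D: "D1 a" "D1 b" using h S1 by (auto simp: closedS_def)
    show "D1 h" using D h by (simp add: D1_add D1_mulx)
    have "pdx h = fadd (mulx (pdx a)) (fadd a (pdx b))"
      using D by (simp add: h pdx_fadd_D D1_mulx pdx_mulx_D) (simp add: fadd_def algebra_simps)
    then show "pdx h \<in> S" using h D S1 unfolding S_def closedS_def by blast
    have "pdt h = fadd (mulx (pdt a)) (pdt b)"
      using D by (simp add: h pdt_fadd_D D1_mulx pdt_mulx_D)
    then show "pdt h \<in> S" using h D S1 unfolding S_def closedS_def by blast
  next
    fix h h' assume "h \<in> S" "h' \<in> S"
    then obtain a b a' b' where h: "h = fadd (mulx a) b" "a \<in> S1" "b \<in> S1" "h' = fadd (mulx a') b'" "a' \<in> S1" "b' \<in> S1"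
      by (auto simp: S_def)
    have "fadd h h' = fadd (mulx (fadd a a')) (fadd b b')" by (simp add: h fadd_def mulx_def algebra_simps)
    then show "fadd h h' \<in> S" using h S1 unfolding S_def closedS_def by blast
  next
    fix c h assume "h \<in> S"
    then obtain a b where h: "h = fadd (mulx a) b" "a \<in> S1" "b \<in> S1" by (auto simp: S_def)
    have "fscale c h = fadd (mulx (fscale c a)) (fscale c b)" by (simp add: h fadd_def fscale_def mulx_def algebra_simps)
    then show "fscale c h \<in> S" using h S1 unfolding S_def closedS_def by blast
  qed
  ultimately show ?thesis by (auto simp: G_def)
qed

lemma G_mult: assumes "G f" shows "G (mult f)"
proof -
  obtain S1 where S1: "f \<in> S1" "closedS S1" using assms(1) by (auto simp: G_def)
  define S where "S = {fadd (mult a) b | a b. a \<in> S1 \<and> b \<in> S1}"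
  have "mult f = fadd (mult f) (fscale 0 f)" by (simp add: fadd_def fscale_def)
  then have "mult f \<in> S" using S1 unfolding S_def closedS_def by blast
  moreover have "closedS S"
    unfolding closedS_def
  proof (intro conjI ballI allI)
    fix h assume "h \<in> S"
    then obtain a b where h: "h = fadd (mult a) b" "a \<in> S1" "b \<in> S1" by (auto simp: S_def)
    have D: "D1 a" "D1 b" using h S1 by (auto simp: closedS_def)
    show "D1 h" using D h by (simp add: D1_add D1_mult)
    have "pdt h = fadd (mult (pdt a)) (fadd a (pdt b))"
      using D by (simp add: h pdt_fadd_D D1_mult pdt_mult_D) (simp add: fadd_def algebra_simps)
    then show "pdt h \<in> S" using h D S1 unfolding S_def closedS_def by blast
    have "pdx h = fadd (mult (pdx a)) (pdx b)"
      using D by (simp add: h pdx_fadd_D D1_mult pdx_mult_D)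
    then show "pdx h \<in> S" using h D S1 unfolding S_def closedS_def by blast
  next
    fix h h' assume "h \<in> S" "h' \<in> S"
    then obtain a b a' b' where h: "h = fadd (mult a) b" "a \<in> S1" "b \<in> S1" "h' = fadd (mult a') b'" "a' \<in> S1" "b' \<in> S1"
      by (auto simp: S_def)
    have "fadd h h' = fadd (mult (fadd a a')) (fadd b b')" by (simp add: h fadd_def mult_def algebra_simps)
    then show "fadd h h' \<in> S" using h S1 unfolding S_def closedS_def by blast
  next
    fix c h assume "h \<in> S"
    then obtain a b where h: "h = fadd (mult a) b" "a \<in> S1" "b \<in> S1" by (auto simp: S_def)
    have "fscale c h = fadd (mult (fscale c a)) (fscale c b)" by (simp add: h fadd_def fscale_def mult_def algebra_simps)
    then show "fscale c h \<in> S" using h S1 unfolding S_def closedS_def by blast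
  qed
  ultimately show ?thesis by (auto simp: G_def)
qed

lemma G_shift: assumes "G f" shows "G (shift a f)"
proof -
  obtain S1 where S1: "f \<in> S1" "closedS S1" using assms(1) by (auto simp: G_def)
  define S where "S = shift a ` S1"
  have "shift a f \<in> S" using S1 by (auto simp: S_def)
  moreover have "closedS S"
    unfolding closedS_def
  proof (intro conjI ballI allI)
    fix h assume "h \<in> S"
    then obtain b where h: "h = shift a b" "b \<in> S1" by (auto simp: S_def)
    show "D1 h" using h S1 by (auto simp: closedS_def D1_shift)
    show "pdx h \<in> S" using h S1 unfolding S_def closedS_def by (auto simp: pdx_shift)
    show "pdt h \<in> S" using h S1 unfolding S_def closedS_def by (auto simp: pdt_shift)
  next
    fix h h' assume "h \<in> S" "h' \<in> S"
    then obtain b b' where h: "h = shift a b" "b \<in> S1" "h' = shift a b'" "b' \<in> S1" by (auto simp: S_def)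
    have "fadd h h' = shift a (fadd b b')" by (simp add: h fadd_def shift_def)
    then show "fadd h h' \<in> S" using h S1 unfolding S_def closedS_def by blast
  next
    fix c h assume "h \<in> S"
    then obtain b where h: "h = shift a b" "b \<in> S1" by (auto simp: S_def)
    have "fscale c h = shift a (fscale c b)" by (simp add: h fscale_def shift_def)
    then show "fscale c h \<in> S" using h S1 unfolding S_def closedS_def by blast
  qed
  ultimately show ?thesis by (auto simp: G_def)
qed

lemma fsub_eq: "fsub f g = fadd f (fscale (-1) g)"
  by (simp add: fsub_def fadd_def fscale_def)

lemma G_fsub: "G f \<Longrightarrow> G g \<Longrightarrow> G (fsub f g)"
  by (simp add: fsub_eq G_fadd G_fscale)



lemma iter_pd_append: "iter_pd (bs @ cs) f = iter_pd bs (iter_pd cs f)"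
  by (induction bs) auto

lemma smooth2_D1: "smooth2 f \<Longrightarrow> D1 (iter_pd bs f)"
  by (simp add: smooth2_def D1_def)

lemma iter_pd_fadd: "smooth2 f \<Longrightarrow> smooth2 g \<Longrightarrow> iter_pd bs (fadd f g) = fadd (iter_pd bs f) (iter_pd bs g)"
  by (induction bs) (auto simp: pdx_fadd_D pdt_fadd_D smooth2_D1)

lemma iter_pd_fscale: "smooth2 f \<Longrightarrow> iter_pd bs (fscale c f) = fscale c (iter_pd bs f)"
  by (induction bs) (auto simp: pdx_fscale_D pdt_fscale_D smooth2_D1)

lemma smooth2_G: assumes "smooth2 f" shows "G f"
proof -
  have "closedS {f. smooth2 f}"
    unfolding closedS_def
  proof (intro conjI ballI allI)
    fix g assume g: "g \<in> {f. smooth2 f}"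
    show "D1 g" using smooth2_D1[of g "[]"] g by simp
    show "pdx g \<in> {f. smooth2 f}" using g
      by (simp add: smooth2_def iter_pd_append[of _ "[True]", simplified, symmetric])
    show "pdt g \<in> {f. smooth2 f}" using g
      by (simp add: smooth2_def iter_pd_append[of _ "[False]", simplified, symmetric])
  next
    fix g h assume "g \<in> {f. smooth2 f}" "h \<in> {f. smooth2 f}"
    then show "fadd g h \<in> {f. smooth2 f}"
      using D1_add[OF smooth2_D1 smooth2_D1] by (simp add: iter_pd_fadd smooth2_def[of "fadd g h"] D1_def[symmetric])
  next
    fix c g assume "g \<in> {f. smooth2 f}"
    then show "fscale c g \<in> {f. smooth2 f}"
      using D1_scale[OF smooth2_D1] by (simp add: iter_pd_fscale smooth2_def[of "fscale c g"] D1_def[symmetric])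
  qed
  then show ?thesis using assms by (auto simp: G_def)
qed



lemma schwarz_key:
  fixes f fx ft fxt ftx :: "real \<Rightarrow> real \<Rightarrow> real"
  assumes fx: "\<And>x t. ((\<lambda>y. f y t) has_real_derivative fx x t) (at x)"
    and ft: "\<And>x t. ((\<lambda>s. f x s) has_real_derivative ft x t) (at t)"
    and fxt: "\<And>x t. ((\<lambda>s. fx x s) has_real_derivative fxt x t) (at t)"
    and ftx: "\<And>x t. ((\<lambda>y. ft y t) has_real_derivative ftx x t) (at x)"
    and h: "h > 0"
  shows "\<exists>a b a' b'. x < a \<and> a < x + h \<and> t < b \<and> b < t + h \<and> x < a' \<and> a' < x + h \<and> t < b' \<and> b' < t + h
     \<and> fxt a b = ftx a' b'"
proof -
  define \<Delta> where "\<Delta> = f (x+h) (t+h) - f (x+h) t - f x (t+h) + f x t"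
  have "\<exists>z>x. z < x + h \<and> (\<lambda>y. f y (t+h) - f y t) (x+h) - (\<lambda>y. f y (t+h) - f y t) x
      = (x + h - x) * (fx z (t+h) - fx z t)"
    using h by (intro MVT2) (auto intro!: derivative_eq_intros fx)
  then obtain a where a: "x < a" "a < x + h" "\<Delta> = h * (fx a (t+h) - fx a t)"
    by (auto simp: \<Delta>_def algebra_simps)
  have "\<exists>z>t. z < t + h \<and> fx a (t+h) - fx a t = (t + h - t) * fxt a z"
    using h by (intro MVT2) (auto intro!: fxt)
  then obtain b where b: "t < b" "b < t + h" "fx a (t+h) - fx a t = h * fxt a b" by auto
  have "\<exists>z>t. z < t + h \<and> (\<lambda>s. f (x+h) s - f x s) (t+h) - (\<lambda>s. f (x+h) s - f x s) t
      = (t + h - t) * (ft (x+h) z - ft x z)"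
    using h by (intro MVT2) (auto intro!: derivative_eq_intros ft)
  then obtain b' where b': "t < b'" "b' < t + h" "\<Delta> = h * (ft (x+h) b' - ft x b')"
    by (auto simp: \<Delta>_def algebra_simps)
  have "\<exists>z>x. z < x + h \<and> ft (x+h) b' - ft x b' = (x + h - x) * ftx z b'"
    using h by (intro MVT2) (auto intro!: ftx)
  then obtain a' where a': "x < a'" "a' < x + h" "ft (x+h) b' - ft x b' = h * ftx a' b'" by auto
  have "h * (h * fxt a b) = h * (h * ftx a' b')" using a b a' b' by simp
  then have "fxt a b = ftx a' b'" using h by simp
  then show ?thesis using a b a' b' by blast
qed

lemma aux_abs3: "\<bar>A::real\<bar> < \<bar>C\<bar> / 2 \<Longrightarrow> \<bar>B\<bar> < \<bar>C\<bar> / 2 \<Longrightarrow> \<bar>C\<bar> \<le> \<bar>B\<bar> + \<bar>A\<bar> \<Longrightarrow> False"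
  by linarith

lemma schwarz:
  fixes f fx ft fxt ftx :: "real \<Rightarrow> real \<Rightarrow> real"
  assumes fx: "\<And>x t. ((\<lambda>y. f y t) has_real_derivative fx x t) (at x)"
    and ft: "\<And>x t. ((\<lambda>s. f x s) has_real_derivative ft x t) (at t)"
    and fxt: "\<And>x t. ((\<lambda>s. fx x s) has_real_derivative fxt x t) (at t)"
    and ftx: "\<And>x t. ((\<lambda>y. ft y t) has_real_derivative ftx x t) (at x)"
    and c1: "isCont (\<lambda>p. fxt (fst p) (snd p)) (x, t)"
    and c2: "isCont (\<lambda>p. ftx (fst p) (snd p)) (x, t)"
  shows "fxt x t = ftx x t"
proof (rule ccontr)
  assume ne: "fxt x t \<noteq> ftx x t"
  define e where "e = \<bar>fxt x t - ftx x t\<bar> / 2"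
  have e: "e > 0" using ne by (simp add: e_def)
  obtain d1 where d1: "d1 > 0" "\<And>p. dist p (x, t) < d1 \<Longrightarrow> dist (fxt (fst p) (snd p)) (fxt x t) < e"
    using c1 e unfolding continuous_at_eps_delta by fastforce
  obtain d2 where d2: "d2 > 0" "\<And>p. dist p (x, t) < d2 \<Longrightarrow> dist (ftx (fst p) (snd p)) (ftx x t) < e"
    using c2 e unfolding continuous_at_eps_delta by fastforce
  define h where "h = min d1 d2 / 2"
  have h: "h > 0" using d1 d2 by (simp add: h_def)
  obtain a b a' b' where ab: "x < a" "a < x + h" "t < b" "b < t + h" "x < a'" "a' < x + h" "t < b'" "b' < t + h"
     "fxt a b = ftx a' b'"
    using schwarz_key[OF fx ft fxt ftx h] by blast
  have dd: "dist (p, q) (x, t) < 2 * h" if "x < p" "p < x + h" "t < q" "q < t + h" for p q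
  proof -
    have "dist (p, q) (x, t) = norm (p - x, q - t)" by (simp add: dist_norm)
    also have "\<dots> \<le> norm (p - x) + norm (q - t)" by (rule norm_Pair_le)
    also have "\<dots> < 2 * h" using that by simp
    finally show ?thesis .
  qed
  have "dist (fxt a b) (fxt x t) < e" using d1(2)[of "(a, b)"] dd[of a b] ab h_def by simp
  moreover have "dist (ftx a' b') (ftx x t) < e" using d2(2)[of "(a', b')"] dd[of a' b'] ab h_def by simp
  moreover have "fxt x t - ftx x t = (ftx a' b' - ftx x t) - (fxt a b - fxt x t)" using ab(9) by simp
  then have "\<bar>fxt x t - ftx x t\<bar> \<le> \<bar>ftx a' b' - ftx x t\<bar> + \<bar>fxt a b - fxt x t\<bar>"
    by (metis abs_triangle_ineq4)
  ultimately show False unfolding e_def dist_real_def by (rule aux_abs3)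
qed

lemma pdt_pdx: assumes "G f" shows "pdt (pdx f) = pdx (pdt f)"
proof (intro ext)
  fix x t
  have D: "D1 f" "D1 (pdx f)" "D1 (pdt f)" "D1 (pdt (pdx f))" "D1 (pdx (pdt f))"
    using assms by (simp_all add: G_D1 G_pdx G_pdt)
  show "pdt (pdx f) x t = pdx (pdt f) x t"
    by (rule schwarz[where f=f and fx="pdx f" and ft="pdt f" and fxt="pdt (pdx f)" and ftx="pdx (pdt f)"])
       (rule D1_px D1_pt D1_cont D)+
qed



lemma pdx_fadd: "G f \<Longrightarrow> G g \<Longrightarrow> pdx (fadd f g) = fadd (pdx f) (pdx g)"
  by (simp add: pdx_fadd_D G_D1)
lemma pdt_fadd: "G f \<Longrightarrow> G g \<Longrightarrow> pdt (fadd f g) = fadd (pdt f) (pdt g)"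
  by (simp add: pdt_fadd_D G_D1)
lemma pdx_fscale: "G f \<Longrightarrow> pdx (fscale c f) = fscale c (pdx f)"
  by (simp add: pdx_fscale_D G_D1)
lemma pdt_fscale: "G f \<Longrightarrow> pdt (fscale c f) = fscale c (pdt f)"
  by (simp add: pdt_fscale_D G_D1)
lemma pdx_fsub: "G f \<Longrightarrow> G g \<Longrightarrow> pdx (fsub f g) = fsub (pdx f) (pdx g)"
  by (simp add: fsub_eq pdx_fadd pdx_fscale G_fscale)
lemma pdt_fsub: "G f \<Longrightarrow> G g \<Longrightarrow> pdt (fsub f g) = fsub (pdt f) (pdt g)"
  by (simp add: fsub_eq pdt_fadd pdt_fscale G_fscale)
lemma pdx_mulx: "G f \<Longrightarrow> pdx (mulx f) = fadd f (mulx (pdx f))"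
  by (simp add: pdx_mulx_D G_D1)
lemma pdt_mulx: "G f \<Longrightarrow> pdt (mulx f) = mulx (pdt f)"
  by (simp add: pdt_mulx_D G_D1)
lemma pdx_mult: "G f \<Longrightarrow> pdx (mult f) = mult (pdx f)"
  by (simp add: pdx_mult_D G_D1)
lemma pdt_mult: "G f \<Longrightarrow> pdt (mult f) = fadd f (mult (pdt f))"
  by (simp add: pdt_mult_D G_D1)

lemma mulx_fadd: "mulx (fadd f g) = fadd (mulx f) (mulx g)" by (simp add: mulx_def fadd_def algebra_simps)
lemma mulx_fsub: "mulx (fsub f g) = fsub (mulx f) (mulx g)" by (simp add: mulx_def fsub_def algebra_simps)
lemma mulx_fscale: "mulx (fscale c f) = fscale c (mulx f)" by (simp add: mulx_def fscale_def algebra_simps)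
lemma mult_fadd: "mult (fadd f g) = fadd (mult f) (mult g)" by (simp add: mult_def fadd_def algebra_simps)
lemma mult_fsub: "mult (fsub f g) = fsub (mult f) (mult g)" by (simp add: mult_def fsub_def algebra_simps)
lemma mult_fscale: "mult (fscale c f) = fscale c (mult f)" by (simp add: mult_def fscale_def algebra_simps)
lemma shift_fadd: "shift a (fadd f g) = fadd (shift a f) (shift a g)" by (simp add: shift_def fadd_def)
lemma shift_fsub: "shift a (fsub f g) = fsub (shift a f) (shift a g)" by (simp add: shift_def fsub_def)
lemma shift_fscale: "shift a (fscale c f) = fscale c (shift a f)" by (simp add: shift_def fscale_def)

lemma app_simps:
  "oadd A B f = fadd (A f) (B f)" "osub A B f = fsub (A f) (B f)" "oscale c A f = fscale c (A f)"
  "comm A B f = fsub (A (B f)) (B (A f))" "fwd \<tau> f = fscale (1/\<tau>) (fsub (shift \<tau> f) f)"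
  "bwd \<tau> f = fscale (1/\<tau>) (fsub f (shift (-\<tau>) f))"
  by (simp_all add: oadd_def fadd_def osub_def fsub_def oscale_def fscale_def comm_def fwd_def bwd_def)

lemmas push_simps = pdx_fadd pdt_fadd pdx_fscale pdt_fscale pdx_fsub pdt_fsub pdx_mulx pdt_mulx
  pdx_mult pdt_mult pdx_shift pdt_shift pdt_pdx mulx_fadd mulx_fsub mulx_fscale mult_fadd mult_fsub
  mult_fscale shift_fadd shift_fsub shift_fscale app_simps
  G_pdx G_pdt G_mulx G_mult G_shift G_fadd G_fsub G_fscale

lemma pt_simps: "fadd f g x t = f x t + g x t" "fsub f g x t = f x t - g x t" "fscale c f x t = c * f x t"
  "mulx f x t = x * f x t" "mult f x t = t * f x t" "shift a f x t = f x (t + a)"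
  by (simp_all add: fadd_def fsub_def fscale_def mulx_def mult_def shift_def)

lemma rel1: assumes "G \<Phi>" "\<tau> \<noteq> 0" shows "comm (opK \<tau>) opH \<Phi> = (shift (- \<tau>) \<circ> opP) \<Phi>"
  apply (simp add: opK_def opD_def opC1_def opC2_def ozero_def opH_def opP_def push_simps assms)
  apply (intro ext)
  apply (simp add: pt_simps field_simps assms)
  done

lemma rel2: assumes "G \<Phi>" "\<tau> \<noteq> 0" shows "comm (opK \<tau>) opP \<Phi> = fwd \<tau> \<Phi>"
  apply (simp add: opK_def opD_def opC1_def opC2_def ozero_def opH_def opP_def push_simps assms)
  apply (intro ext)
  apply (simp add: pt_simps field_simps assms)
  done

lemma rel3: assumes "G \<Phi>" "\<tau> \<noteq> 0" shows "comm opH opP \<Phi> = ozero \<Phi>"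
  apply (simp add: opK_def opD_def opC1_def opC2_def ozero_def opH_def opP_def push_simps assms)
  apply (intro ext)
  apply (simp add: pt_simps field_simps assms)
  done

lemma rel4: assumes "G \<Phi>" "\<tau> \<noteq> 0" shows "comm (opD \<tau>) opH \<Phi> = bwd \<tau> \<Phi>"
  apply (simp add: opK_def opD_def opC1_def opC2_def ozero_def opH_def opP_def push_simps assms)
  apply (intro ext)
  apply (simp add: pt_simps field_simps assms)
  done

lemma rel5: assumes "G \<Phi>" "\<tau> \<noteq> 0" shows "comm (opD \<tau>) (opC1 \<tau>) \<Phi> = oadd (oscale (-1) (opC1 \<tau>)) (oscale \<tau> (opD \<tau> \<circ> opD \<tau>)) \<Phi>"
  apply (simp add: opK_def opD_def opC1_def opC2_def ozero_def opH_def opP_def push_simps assms)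
  apply (intro ext)
  apply (simp add: pt_simps field_simps assms)
  done

lemma rel6: assumes "G \<Phi>" "\<tau> \<noteq> 0" shows "comm opH (opC1 \<tau>) \<Phi> = oscale (-2) (opD \<tau>) \<Phi>"
  apply (simp add: opK_def opD_def opC1_def opC2_def ozero_def opH_def opP_def push_simps assms)
  apply (intro ext)
  apply (simp add: pt_simps field_simps assms)
  done

lemma rel7: assumes "G \<Phi>" "\<tau> \<noteq> 0" shows "comm (opD \<tau>) opP \<Phi> = opP \<Phi>"
  apply (simp add: opK_def opD_def opC1_def opC2_def ozero_def opH_def opP_def push_simps assms)
  apply (intro ext)
  apply (simp add: pt_simps field_simps assms)
  done

lemma rel8: assumes "G \<Phi>" "\<tau> \<noteq> 0" shows "comm (opD \<tau>) (opC2 \<tau>) \<Phi> = oscale (-1) (opC2 \<tau>) \<Phi>"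
  apply (simp add: opK_def opD_def opC1_def opC2_def ozero_def opH_def opP_def push_simps assms)
  apply (intro ext)
  apply (simp add: pt_simps field_simps assms)
  done

lemma rel9: assumes "G \<Phi>" "\<tau> \<noteq> 0" shows "comm opP (opC2 \<tau>) \<Phi> = oscale 2 (opD \<tau>) \<Phi>"
  apply (simp add: opK_def opD_def opC1_def opC2_def ozero_def opH_def opP_def push_simps assms)
  apply (intro ext)
  apply (simp add: pt_simps field_simps assms)
  done

lemma rel10: assumes "G \<Phi>" "\<tau> \<noteq> 0" shows "comm (opK \<tau>) (opC1 \<tau>) \<Phi> = opC2 \<tau> \<Phi>"
  apply (simp add: opK_def opD_def opC1_def opC2_def ozero_def opH_def opP_def push_simps assms)
  apply (intro ext)
  apply (simp add: pt_simps field_simps assms)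
  done

lemma rel11: assumes "G \<Phi>" "\<tau> \<noteq> 0" shows "comm (opK \<tau>) (opC2 \<tau>) \<Phi> = osub (opC1 \<tau>) (oscale \<tau> (opD \<tau> \<circ> opD \<tau>)) \<Phi>"
  apply (simp add: opK_def opD_def opC1_def opC2_def ozero_def opH_def opP_def push_simps assms)
  apply (intro ext)
  apply (simp add: pt_simps field_simps assms)
  done

lemma rel12: assumes "G \<Phi>" "\<tau> \<noteq> 0" shows "comm (opC1 \<tau>) (opC2 \<tau>) \<Phi> = oscale (- \<tau>) (oadd (opD \<tau> \<circ> opC2 \<tau>) (opC2 \<tau> \<circ> opD \<tau>)) \<Phi>"
  apply (simp add: opK_def opD_def opC1_def opC2_def ozero_def opH_def opP_def push_simps assms)
  apply (intro ext)
  apply (simp add: pt_simps field_simps assms)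
  done

lemma rel13: assumes "G \<Phi>" "\<tau> \<noteq> 0" shows "comm opH (opC2 \<tau>) \<Phi> = oadd (shift (- \<tau>) \<circ> opK \<tau>) (opK \<tau> \<circ> shift (- \<tau>)) \<Phi>"
  apply (simp add: opK_def opD_def opC1_def opC2_def ozero_def opH_def opP_def push_simps assms)
  apply (intro ext)
  apply (simp add: pt_simps field_simps assms)
  done

lemma rel14: assumes "G \<Phi>" "\<tau> \<noteq> 0" shows "comm opP (opC1 \<tau>) \<Phi> = osub (oscale (-2) (opK \<tau>)) (oscale \<tau> (oadd (opD \<tau> \<circ> opP) (opP \<circ> opD \<tau>))) \<Phi>"
  apply (simp add: opK_def opD_def opC1_def opC2_def ozero_def opH_def opP_def push_simps assms)
  apply (intro ext)
  apply (simp add: pt_simps field_simps assms)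
  done

lemma rel15: assumes "G \<Phi>" "\<tau> \<noteq> 0" shows "comm (opK \<tau>) (opD \<tau>) \<Phi> = ozero \<Phi>"
  apply (simp add: opK_def opD_def opC1_def opC2_def ozero_def opH_def opP_def push_simps assms)
  apply (intro ext)
  apply (simp add: pt_simps field_simps assms)
  done



lemma lim_shift: assumes "D1 g" shows "((\<lambda>s. g x (t + c * s)) \<longlongrightarrow> g x t) (at 0)"
proof -
  have "((\<lambda>s. (x, t + c * s)) \<longlongrightarrow> (x, t)) (at (0::real))"
    by (auto intro!: tendsto_eq_intros)
  from isCont_tendsto_compose[OF D1_cont[OF assms] this] show ?thesis by simp
qed

lemma lim_fwd: assumes "D1 g" shows "((\<lambda>s. (g x (t + s) - g x t) / s) \<longlongrightarrow> pdt g x t) (at 0)"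
  using D1_pt[OF assms, of x t] by (simp add: DERIV_def)

lemma lim_bwd: assumes "D1 g" shows "((\<lambda>s. (g x t - g x (t - s)) / s) \<longlongrightarrow> pdt g x t) (at 0)"
proof -
  have "((\<lambda>h. g x (t - h)) has_real_derivative pdt g x (t - 0) * (-1)) (at 0)"
    by (rule DERIV_chain2[where f="\<lambda>s. g x s"]) (auto intro!: D1_pt assms derivative_eq_intros)
  then have "((\<lambda>h. (g x (t - (0 + h)) - g x (t - 0)) / h) \<longlongrightarrow> - pdt g x t) (at 0)"
    by (simp add: DERIV_def)
  from tendsto_minus[OF this] show ?thesis by (simp add: minus_divide_left minus_diff_eq)
qed

lemma one_div_mult: "(1 / s) * (A::real) = A / s" by simp

lemma lim_shift_m: assumes "D1 g" shows "((\<lambda>s. g x (t + - s)) \<longlongrightarrow> g x t) (at 0)"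
  using lim_shift[OF assms, of x t "-1"] by simp

lemma plus_neg_cancel: "(a::real) + - b + b = a" by simp

lemma lim_facts: assumes "G \<Phi>"
  shows "((\<lambda>s. (\<Phi> x (t + s) - \<Phi> x t) / s) \<longlongrightarrow> pdt \<Phi> x t) (at 0)"
    "((\<lambda>s. (\<Phi> x t - \<Phi> x (t + - s)) / s) \<longlongrightarrow> pdt \<Phi> x t) (at 0)"
    "((\<lambda>s. pdx \<Phi> x (t + - s)) \<longlongrightarrow> pdx \<Phi> x t) (at 0)"
    "((\<lambda>s. pdx \<Phi> x (t + - 2 * s)) \<longlongrightarrow> pdx \<Phi> x t) (at 0)"
  using lim_fwd[OF G_D1[OF assms]] lim_bwd[OF G_D1[OF assms]] lim_shift_m[OF G_D1[OF G_pdx[OF assms]]]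
     lim_shift[OF G_D1[OF G_pdx[OF assms]], of x t "- 2"] by simp_all

lemma limK: assumes "G \<Phi>" shows "((\<lambda>s. opK s \<Phi> x t) \<longlongrightarrow> opK0 \<Phi> x t) (at 0)"
  apply (simp only: opK_def opK0_def app_simps pt_simps comp_apply id_apply one_div_mult plus_neg_cancel)
  apply (rule tendsto_eq_rhs)
   apply (rule lim_facts[OF assms] tendsto_const tendsto_intros)+
  apply (simp add: algebra_simps)
  done
lemma limD: assumes "G \<Phi>" shows "((\<lambda>s. opD s \<Phi> x t) \<longlongrightarrow> opD0 \<Phi> x t) (at 0)"
  apply (simp only: opD_def opD0_def app_simps pt_simps comp_apply id_apply one_div_mult plus_neg_cancel)
  apply (rule tendsto_eq_rhs)
   apply (rule lim_facts[OF assms] tendsto_const tendsto_intros)+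
  apply (simp add: algebra_simps)
  done
lemma limC1: assumes "G \<Phi>" shows "((\<lambda>s. opC1 s \<Phi> x t) \<longlongrightarrow> opC10 \<Phi> x t) (at 0)"
  apply (simp only: opC1_def opC10_def app_simps pt_simps comp_apply id_apply one_div_mult plus_neg_cancel)
  apply (rule tendsto_eq_rhs)
   apply (rule lim_facts[OF assms] tendsto_const tendsto_intros)+
  apply (simp add: algebra_simps)
  done
lemma limC2: assumes "G \<Phi>" shows "((\<lambda>s. opC2 s \<Phi> x t) \<longlongrightarrow> opC20 \<Phi> x t) (at 0)"
  apply (simp only: opC2_def opC20_def app_simps pt_simps comp_apply id_apply one_div_mult plus_neg_cancel)
  apply (rule tendsto_eq_rhs)
   apply (rule lim_facts[OF assms] tendsto_const tendsto_intros)+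
  apply (simp add: algebra_simps)
  done

theorem mainTheorem4:
  fixes \<tau> :: real and \<Phi> :: fn2
  assumes "\<tau> \<noteq> 0" and "smooth2 \<Phi>"
  shows "(comm (opK \<tau>) opH \<Phi> = (shift (- \<tau>) \<circ> opP) \<Phi>)
    \<and> (comm (opK \<tau>) opP \<Phi> = fwd \<tau> \<Phi>)
    \<and> (comm opH opP \<Phi> = ozero \<Phi>)
    \<and> (comm (opD \<tau>) opH \<Phi> = bwd \<tau> \<Phi>)
    \<and> (comm (opD \<tau>) (opC1 \<tau>) \<Phi> = oadd (oscale (-1) (opC1 \<tau>)) (oscale \<tau> (opD \<tau> \<circ> opD \<tau>)) \<Phi>)
    \<and> (comm opH (opC1 \<tau>) \<Phi> = oscale (-2) (opD \<tau>) \<Phi>)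
    \<and> (comm (opD \<tau>) opP \<Phi> = opP \<Phi>)
    \<and> (comm (opD \<tau>) (opC2 \<tau>) \<Phi> = oscale (-1) (opC2 \<tau>) \<Phi>)
    \<and> (comm opP (opC2 \<tau>) \<Phi> = oscale 2 (opD \<tau>) \<Phi>)
    \<and> (comm (opK \<tau>) (opC1 \<tau>) \<Phi> = opC2 \<tau> \<Phi>)
    \<and> (comm (opK \<tau>) (opC2 \<tau>) \<Phi> = osub (opC1 \<tau>) (oscale \<tau> (opD \<tau> \<circ> opD \<tau>)) \<Phi>)
    \<and> (comm (opC1 \<tau>) (opC2 \<tau>) \<Phi> = oscale (- \<tau>) (oadd (opD \<tau> \<circ> opC2 \<tau>) (opC2 \<tau> \<circ> opD \<tau>)) \<Phi>)
    \<and> (comm opH (opC2 \<tau>) \<Phi> = oadd (shift (- \<tau>) \<circ> opK \<tau>) (opK \<tau> \<circ> shift (- \<tau>)) \<Phi>)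
    \<and> (comm opP (opC1 \<tau>) \<Phi> = osub (oscale (-2) (opK \<tau>)) (oscale \<tau> (oadd (opD \<tau> \<circ> opP) (opP \<circ> opD \<tau>))) \<Phi>)
    \<and> (comm (opK \<tau>) (opD \<tau>) \<Phi> = ozero \<Phi>)
    \<and> (\<forall>x t. ((\<lambda>s. opK s \<Phi> x t) \<longlongrightarrow> opK0 \<Phi> x t) (at 0))
    \<and> (\<forall>x t. ((\<lambda>s. opD s \<Phi> x t) \<longlongrightarrow> opD0 \<Phi> x t) (at 0))
    \<and> (\<forall>x t. ((\<lambda>s. opC1 s \<Phi> x t) \<longlongrightarrow> opC10 \<Phi> x t) (at 0))
    \<and> (\<forall>x t. ((\<lambda>s. opC2 s \<Phi> x t) \<longlongrightarrow> opC20 \<Phi> x t) (at 0))"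
  proof -
  have G: "G \<Phi>" using assms(2) by (rule smooth2_G)
  show ?thesis
    using rel1[OF G assms(1)] rel2[OF G assms(1)] rel3[OF G assms(1)] rel4[OF G assms(1)]
      rel5[OF G assms(1)] rel6[OF G assms(1)] rel7[OF G assms(1)] rel8[OF G assms(1)]
      rel9[OF G assms(1)] rel10[OF G assms(1)] rel11[OF G assms(1)] rel12[OF G assms(1)]
      rel13[OF G assms(1)] rel14[OF G assms(1)] rel15[OF G assms(1)]
      limK[OF G] limD[OF G] limC1[OF G] limC2[OF G]
    by blast
qed

end
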